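(* Let $V$ be a finite-dimensional vector space over a field of characteristic zero, and let $A^{a_1\dots a_p}$ and $B_{a_1\dots a_p}$ be $p$-forms (totally antisymmetric tensors, $A$ contravariant and $B$ covariant), with $A$ simple. Let $P^a{}_b=A^{ac_2\dots c_p}B_{bc_2\dots c_p}$. Then $$P\Bigl(P-\frac{1}{p}[P]\Bigr)=0.$$
   Context: Index-free notation for $(1,1)$-tensors: $P$ denotes $P^a{}_b$, products denote composition (e.g. $P^2=P^a{}_cP^c{}_b$), $[P]=P^c{}_c$ is the trace, and a scalar term in a tensor equation is understood as multiplied by the identity $\delta^a_b$. A $p$-form $A$ is simple if $A^{a_1\dots a_p}=u^{[a_1}\cdots w^{a_p]}$ for some vectors $u,\dots,w$, where square brackets denote antisymmetrisation. No metric is assumed. *)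

theory Defs
  imports Main "HOL-Combinatorics.Permutations"
begin

text \<open>Coordinates: V has a basis indexed by the finite type 'n; scalars in a field 'a of
characteristic zero. A tensor with p indices is a function on index lists, only its values
on lists of length p matter.\<close>

definition antisym_form :: "nat \<Rightarrow> ('n list \<Rightarrow> 'a::field) \<Rightarrow> bool" where
  "antisym_form p A \<longleftrightarrow>
     (\<forall>xs \<sigma>. length xs = p \<longrightarrow> \<sigma> permutes {..<p} \<longrightarrow>
        A (map (\<lambda>k. xs ! \<sigma> k) [0..<p]) = of_int (sign \<sigma>) * A xs)"

definition simple_form :: "nat \<Rightarrow> ('n list \<Rightarrow> 'a::field) \<Rightarrow> bool" where
  "simple_form p A \<longleftrightarrow>
     (\<exists>u :: nat \<Rightarrow> 'n \<Rightarrow> 'a. \<forall>xs. length xs = p \<longrightarrow>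
        A xs = (1 / of_nat (fact p)) *
          (\<Sum>\<sigma>\<in>{\<sigma>. \<sigma> permutes {..<p}}. of_int (sign \<sigma>) * (\<Prod>k<p. u (\<sigma> k) (xs ! k))))"

definition contract :: "nat \<Rightarrow> ('n::finite list \<Rightarrow> 'a::field) \<Rightarrow> ('n list \<Rightarrow> 'a) \<Rightarrow> 'n \<Rightarrow> 'n \<Rightarrow> 'a" where
  "contract p A B a b = (\<Sum>cs\<in>{cs. length cs = p - 1}. A (a # cs) * B (b # cs))"

definition tr11 :: "('n::finite \<Rightarrow> 'n \<Rightarrow> 'a::field) \<Rightarrow> 'a" where
  "tr11 P = (\<Sum>c\<in>UNIV. P c c)"

definition comp11 :: "('n::finite \<Rightarrow> 'n \<Rightarrow> 'a::field) \<Rightarrow> ('n \<Rightarrow> 'n \<Rightarrow> 'a) \<Rightarrow> 'n \<Rightarrow> 'n \<Rightarrow> 'a" where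
  "comp11 P Q a b = (\<Sum>c\<in>UNIV. P a c * Q c b)"

definition delta11 :: "'n \<Rightarrow> 'n \<Rightarrow> 'a::field" where
  "delta11 a b = (if a = b then 1 else 0)"

end

theory Submission
  imports Defs
begin

lemma fin_L: "finite {xs :: 'n::finite list. length xs = n}"
  using finite_lists_length_eq[of "UNIV :: 'n set" n] by simp

lemma split_sum:
  fixes f :: "'n::finite list \<Rightarrow> 'a::comm_monoid_add"
  shows "(\<Sum>xs\<in>{xs. length xs = Suc m}. f xs) = (\<Sum>c\<in>UNIV. \<Sum>cs\<in>{cs. length cs = m}. f (c#cs))"
proof -
  have "(\<Sum>c\<in>UNIV. \<Sum>cs\<in>{cs. length cs = m}. f (c#cs)) = (\<Sum>z\<in>UNIV \<times> {cs. length cs = m}. f (fst z # snd z))"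
    by (subst sum.cartesian_product) (simp add: case_prod_beta)
  also have "\<dots> = (\<Sum>xs\<in>{xs. length xs = Suc m}. f xs)"
    by (rule sum.reindex_bij_witness[of _ "\<lambda>xs. (hd xs, tl xs)" "\<lambda>z. fst z # snd z"])
       (auto simp: length_Suc_conv)
  finally show ?thesis by simp
qed

lemma G_perm:
  fixes B :: "'n::finite list \<Rightarrow> 'a::field" and u :: "nat \<Rightarrow> 'n \<Rightarrow> 'a"
  assumes aB: "antisym_form p B" and pi: "\<pi> permutes {..<p}"
  shows "(\<Sum>xs\<in>{xs. length xs = p}. B xs * (\<Prod>k<p. u (w (\<pi> k)) (xs!k)))
       = of_int (sign \<pi>) * (\<Sum>xs\<in>{xs. length xs = p}. B xs * (\<Prod>k<p. u (w k) (xs!k)))"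
proof -
  let ?L = "{xs :: 'n list. length xs = p}"
  let ?h = "\<lambda>ys. map (\<lambda>k. ys ! inv \<pi> k) [0..<p]"
  let ?h' = "\<lambda>zs. map (\<lambda>k. zs ! \<pi> k) [0..<p]"
  have ipi: "inv \<pi> permutes {..<p}" using pi by (rule permutes_inv)
  have pin: "\<And>k. k < p \<Longrightarrow> \<pi> k < p" using permutes_in_image[OF pi] by auto
  have ipin: "\<And>k. k < p \<Longrightarrow> inv \<pi> k < p" using permutes_in_image[OF ipi] by auto
  have sg: "sign (inv \<pi>) = sign \<pi>"
    using sign_inverse permutation_permutes pi by blast
  have "(\<Sum>xs\<in>?L. B xs * (\<Prod>k<p. u (w k) (xs!k))) = (\<Sum>ys\<in>?L. B (?h ys) * (\<Prod>k<p. u (w k) ((?h ys)!k)))"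
  proof (rule sum.reindex_bij_witness[of _ ?h ?h'])
    fix xs :: "'n list" assume xs: "xs \<in> ?L"
    have lv: "length xs = p" using xs by simp
    show "?h (?h' xs) = xs"
    proof (rule nth_equalityI)
      show "length (?h (?h' xs)) = length xs" using lv by simp
      fix i assume "i < length (?h (?h' xs))"
      hence i: "i < p" by simp
      show "?h (?h' xs) ! i = xs ! i" using i pin[OF i] ipin[OF i]
        by (simp add: permutes_inverses[OF pi])
    qed
    show "?h' xs \<in> ?L" by simp
    show "B (?h (?h' xs)) * (\<Prod>k<p. u (w k) ((?h (?h' xs))!k)) = B xs * (\<Prod>k<p. u (w k) (xs!k))"
      using \<open>?h (?h' xs) = xs\<close> by simp
  next
    fix ys :: "'n list" assume ys: "ys \<in> ?L"
    have lv: "length ys = p" using ys by simp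
    show "?h' (?h ys) = ys"
    proof (rule nth_equalityI)
      show "length (?h' (?h ys)) = length ys" using lv by simp
      fix i assume "i < length (?h' (?h ys))"
      hence i: "i < p" by simp
      show "?h' (?h ys) ! i = ys ! i" using i pin[OF i] ipin[OF i]
        by (simp add: permutes_inverses[OF pi])
    qed
    show "?h ys \<in> ?L" by simp
  qed
  also have "\<dots> = (\<Sum>ys\<in>?L. of_int (sign \<pi>) * B ys * (\<Prod>k<p. u (w k) (ys ! inv \<pi> k)))"
  proof (rule sum.cong[OF refl])
    fix ys assume "ys \<in> ?L"
    hence "B (?h ys) = of_int (sign \<pi>) * B ys" using aB ipi sg unfolding antisym_form_def by auto
    moreover have "(\<Prod>k<p. u (w k) ((?h ys)!k)) = (\<Prod>k<p. u (w k) (ys ! inv \<pi> k))"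
      by (rule prod.cong) auto
    ultimately show "B (?h ys) * (\<Prod>k<p. u (w k) ((?h ys)!k)) = of_int (sign \<pi>) * B ys * (\<Prod>k<p. u (w k) (ys ! inv \<pi> k))"
      by simp
  qed
  also have "\<dots> = (\<Sum>ys\<in>?L. of_int (sign \<pi>) * B ys * (\<Prod>k<p. u (w (\<pi> k)) (ys ! k)))"
  proof (rule sum.cong[OF refl])
    fix ys
    have "(\<Prod>k<p. u (w k) (ys ! inv \<pi> k)) = (\<Prod>k<p. u (w (\<pi> k)) (ys ! inv \<pi> (\<pi> k)))"
      using prod.permute[OF pi, of "\<lambda>k. u (w k) (ys ! inv \<pi> k)"] by (simp add: comp_def)
    also have "\<dots> = (\<Prod>k<p. u (w (\<pi> k)) (ys ! k))"
      by (simp add: permutes_inverses[OF pi])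
    finally show "of_int (sign \<pi>) * B ys * (\<Prod>k<p. u (w k) (ys ! inv \<pi> k)) = of_int (sign \<pi>) * B ys * (\<Prod>k<p. u (w (\<pi> k)) (ys ! k))" by simp
  qed
  finally have e: "(\<Sum>xs\<in>?L. B xs * (\<Prod>k<p. u (w k) (xs!k))) = of_int (sign \<pi>) * (\<Sum>ys\<in>?L. B ys * (\<Prod>k<p. u (w (\<pi> k)) (ys ! k)))"
    by (simp add: sum_distrib_left mult.assoc)
  have "of_int (sign \<pi>) * (of_int (sign \<pi>) :: 'a) = 1"
    by (metis of_int_1 of_int_mult sign_idempotent)
  then show ?thesis unfolding e by (simp add: mult.assoc[symmetric])
qed


lemma G_zero:
  fixes B :: "'n::finite list \<Rightarrow> 'a::field_char_0" and u :: "nat \<Rightarrow> 'n \<Rightarrow> 'a"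
  assumes aB: "antisym_form p B" and "i < p" "j < p" "i \<noteq> j" "w i = w j"
  shows "(\<Sum>xs\<in>{xs. length xs = p}. B xs * (\<Prod>k<p. u (w k) (xs!k))) = 0"
proof -
  have pi: "transpose i j permutes {..<p}" using assms by (simp add: permutes_swap_id)
  have ww: "\<And>k. w (transpose i j k) = w k" using assms by (auto simp: transpose_def)
  have "(\<Sum>xs\<in>{xs. length xs = p}. B xs * (\<Prod>k<p. u (w k) (xs!k)))
     = - (\<Sum>xs\<in>{xs. length xs = p}. B xs * (\<Prod>k<p. u (w k) (xs!k)))"
    using G_perm[OF aB pi, of u w] using assms by (simp add: sign_swap_id ww)
  then show ?thesis by (simp add: eq_neg_iff_add_eq_0)
qed

lemma card_fiber:
  assumes i: "i < p"
  shows "card {\<sigma>. \<sigma> permutes {..<p} \<and> \<sigma> 0 = i} = card {\<sigma>. \<sigma> permutes {..<p} \<and> \<sigma> 0 = (0::nat)}"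
proof -
  have ip: "transpose 0 i permutes {..<p}" using i by (simp add: permutes_swap_id)
  have inv: "\<And>a. transpose 0 i \<circ> (transpose 0 i \<circ> a) = a"
    by (simp add: fun_eq_iff)
  show ?thesis
  proof (rule bij_betw_same_card[of "\<lambda>\<sigma>. transpose 0 i \<circ> \<sigma>"], rule bij_betw_byWitness[of _ "\<lambda>\<sigma>. transpose 0 i \<circ> \<sigma>"])
    show "\<forall>a\<in>{\<sigma>. \<sigma> permutes {..<p} \<and> \<sigma> 0 = i}. transpose 0 i \<circ> (transpose 0 i \<circ> a) = a"
      using inv by blast
    show "\<forall>a'\<in>{\<sigma>. \<sigma> permutes {..<p} \<and> \<sigma> 0 = 0}. transpose 0 i \<circ> (transpose 0 i \<circ> a') = a'"
      using inv by blast
    show "(\<circ>) (transpose 0 i) ` {\<sigma>. \<sigma> permutes {..<p} \<and> \<sigma> 0 = i} \<subseteq> {\<sigma>. \<sigma> permutes {..<p} \<and> \<sigma> 0 = 0}"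
    proof
      fix x assume "x \<in> (\<circ>) (transpose 0 i) ` {\<sigma>. \<sigma> permutes {..<p} \<and> \<sigma> 0 = i}"
      then obtain \<sigma> where "\<sigma> permutes {..<p}" "\<sigma> 0 = i" "x = transpose 0 i \<circ> \<sigma>" by blast
      then show "x \<in> {\<sigma>. \<sigma> permutes {..<p} \<and> \<sigma> 0 = 0}"
        using permutes_compose[OF _ ip] by simp
    qed
    show "(\<circ>) (transpose 0 i) ` {\<sigma>. \<sigma> permutes {..<p} \<and> \<sigma> 0 = 0} \<subseteq> {\<sigma>. \<sigma> permutes {..<p} \<and> \<sigma> 0 = i}"
    proof
      fix x assume "x \<in> (\<circ>) (transpose 0 i) ` {\<sigma>. \<sigma> permutes {..<p} \<and> \<sigma> 0 = 0}"
      then obtain \<sigma> where "\<sigma> permutes {..<p}" "\<sigma> 0 = 0" "x = transpose 0 i \<circ> \<sigma>" by blast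
      then show "x \<in> {\<sigma>. \<sigma> permutes {..<p} \<and> \<sigma> 0 = i}"
        using permutes_compose[OF _ ip] by simp
    qed
  qed
qed

lemma card_fiber0:
  assumes "p \<ge> 1"
  shows "p * card {\<sigma>. \<sigma> permutes {..<p} \<and> \<sigma> 0 = (0::nat)} = fact p"
proof -
  let ?S = "{\<sigma>. \<sigma> permutes {..<p}}"
  have fS: "finite ?S" by (simp add: finite_permutations)
  have im: "(\<lambda>\<sigma>. \<sigma> 0) ` ?S \<subseteq> {..<p}"
    using assms permutes_in_image by fastforce
  have "fact p = card ?S" by (simp add: card_permutations)
  also have "\<dots> = (\<Sum>\<sigma>\<in>?S. 1::nat)" by simp
  also have "\<dots> = (\<Sum>i<p. \<Sum>\<sigma>\<in>{\<sigma>\<in>?S. \<sigma> 0 = i}. 1)"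
    using sum.group[OF fS _ im, of "\<lambda>_. 1::nat"] by simp
  also have "\<dots> = (\<Sum>i<p. card {\<sigma>. \<sigma> permutes {..<p} \<and> \<sigma> 0 = (0::nat)})"
  proof (rule sum.cong[OF refl])
    fix i assume "i \<in> {..<p}"
    hence "i < p" by simp
    have "(\<Sum>\<sigma>\<in>{\<sigma>\<in>?S. \<sigma> 0 = i}. 1::nat) = card {\<sigma>. \<sigma> permutes {..<p} \<and> \<sigma> 0 = i}" by simp
    also have "\<dots> = card {\<sigma>. \<sigma> permutes {..<p} \<and> \<sigma> 0 = (0::nat)}" by (rule card_fiber[OF \<open>i < p\<close>])
    finally show "(\<Sum>\<sigma>\<in>{\<sigma>\<in>?S. \<sigma> 0 = i}. 1::nat) = card {\<sigma>. \<sigma> permutes {..<p} \<and> \<sigma> 0 = (0::nat)}" .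
  qed
  finally show ?thesis by simp
qed


theorem lemma1:
  fixes p :: nat
    and A B :: "'n::finite list \<Rightarrow> 'a::field_char_0"
  assumes "p \<ge> 1"
    and "antisym_form p A" and "antisym_form p B"
    and "simple_form p A"
  shows "comp11 (contract p A B)
           (\<lambda>a b. contract p A B a b - (1 / of_nat p) * tr11 (contract p A B) * delta11 a b)
         = (\<lambda>a b. 0)"
proof -
  define S where "S = {\<sigma>. \<sigma> permutes {..<p}}"
  from assms(4) obtain u :: "nat \<Rightarrow> 'n \<Rightarrow> 'a" where hu: "\<And>xs. length xs = p \<Longrightarrow> A xs = 1 / of_nat (fact p) *
          (\<Sum>\<sigma>\<in>S. of_int (sign \<sigma>) * (\<Prod>k<p. u (\<sigma> k) (xs ! k)))"
    unfolding simple_form_def S_def by blast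
  obtain m where pm: "p = Suc m" using assms(1) by (cases p) auto
  define L where "L = (\<lambda>n. {cs :: 'n list. length cs = n})"
  define c0 :: 'a where "c0 = 1 / of_nat (fact p)"
  define F where "F \<sigma> b = (\<Sum>cs\<in>L m. B (b#cs) * (\<Prod>k<m. u (\<sigma> (Suc k)) (cs!k)))" for \<sigma> b
  define G where "G w = (\<Sum>xs\<in>L p. B xs * (\<Prod>k<p. u (w k) (xs!k)))" for w
  define g where "g = G id"
  define P where "P = contract p A B"
  have finS: "finite S" unfolding S_def by (simp add: finite_permutations)
  have P_eq: "P a b = c0 * (\<Sum>\<sigma>\<in>S. of_int (sign \<sigma>) * u (\<sigma> 0) a * F \<sigma> b)" for a b
  proof -
    have "P a b = (\<Sum>cs\<in>L m. A (a#cs) * B (b#cs))" unfolding P_def contract_def L_def pm by simp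
    also have "\<dots> = (\<Sum>cs\<in>L m. c0 * (\<Sum>\<sigma>\<in>S. of_int (sign \<sigma>) * (u (\<sigma> 0) a * (\<Prod>k<m. u (\<sigma> (Suc k)) (cs!k)))) * B (b#cs))"
    proof (rule sum.cong[OF refl])
      fix cs assume "cs \<in> L m"
      hence "length (a#cs) = p" unfolding L_def pm by simp
      then show "A (a#cs) * B (b#cs) = c0 * (\<Sum>\<sigma>\<in>S. of_int (sign \<sigma>) * (u (\<sigma> 0) a * (\<Prod>k<m. u (\<sigma> (Suc k)) (cs!k)))) * B (b#cs)"
        using hu[OF \<open>length (a#cs) = p\<close>] unfolding c0_def pm by (simp add: prod.lessThan_Suc_shift del: prod.lessThan_Suc)
    qed
    also have "\<dots> = c0 * (\<Sum>cs\<in>L m. \<Sum>\<sigma>\<in>S. of_int (sign \<sigma>) * u (\<sigma> 0) a * (B (b#cs) * (\<Prod>k<m. u (\<sigma> (Suc k)) (cs!k))))"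
      by (simp add: sum_distrib_left sum_distrib_right mult_ac)
    also have "\<dots> = c0 * (\<Sum>\<sigma>\<in>S. \<Sum>cs\<in>L m. of_int (sign \<sigma>) * u (\<sigma> 0) a * (B (b#cs) * (\<Prod>k<m. u (\<sigma> (Suc k)) (cs!k))))"
      by (subst sum.swap) simp
    also have "\<dots> = c0 * (\<Sum>\<sigma>\<in>S. of_int (sign \<sigma>) * u (\<sigma> 0) a * F \<sigma> b)"
      unfolding F_def by (simp add: sum_distrib_left)
    finally show ?thesis .
  qed
  have K: "(\<Sum>c\<in>UNIV. F \<sigma> c * u j c) = G (\<sigma>(0:=j))" for \<sigma> j
  proof -
    have "G (\<sigma>(0:=j)) = (\<Sum>c\<in>UNIV. \<Sum>cs\<in>L m. B (c#cs) * (\<Prod>k<Suc m. u ((\<sigma>(0:=j)) k) ((c#cs)!k)))"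
      unfolding G_def L_def pm by (rule split_sum)
    also have "\<dots> = (\<Sum>c\<in>UNIV. \<Sum>cs\<in>L m. B (c#cs) * (u j c * (\<Prod>k<m. u (\<sigma> (Suc k)) (cs!k))))"
      by (simp add: prod.lessThan_Suc_shift del: prod.lessThan_Suc)
    also have "\<dots> = (\<Sum>c\<in>UNIV. F \<sigma> c * u j c)"
      unfolding F_def by (simp add: sum_distrib_right sum_distrib_left mult_ac)
    finally show ?thesis by simp
  qed
  have Gs: "G \<sigma> = of_int (sign \<sigma>) * g" if "\<sigma> \<in> S" for \<sigma>
    using G_perm[OF assms(3), of \<sigma> u id] that unfolding G_def g_def S_def L_def by simp
  have Gz: "G (\<sigma>(0:=j)) = (if \<sigma> 0 = j then of_int (sign \<sigma>) * g else 0)" if "\<sigma> \<in> S" "j < p" for \<sigma> j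
  proof (cases "\<sigma> 0 = j")
    case True
    then show ?thesis using Gs[OF that(1)] by auto
  next
    case False
    have "j \<in> \<sigma> ` {..<p}" using that permutes_image[of \<sigma> "{..<p}"] unfolding S_def by auto
    then obtain k where k: "k < p" "\<sigma> k = j" by auto
    with False have "k \<noteq> 0" by (cases k) auto
    have "G (\<sigma>(0:=j)) = 0" unfolding G_def L_def
      by (rule G_zero[OF assms(3), of 0 k]) (use k \<open>k \<noteq> 0\<close> pm in auto)
    then show ?thesis using False by simp
  qed
  have tr: "tr11 P = g"
  proof -
    have "tr11 P = (\<Sum>c\<in>UNIV. c0 * (\<Sum>\<sigma>\<in>S. of_int (sign \<sigma>) * u (\<sigma> 0) c * F \<sigma> c))"
      unfolding tr11_def P_eq ..
    also have "\<dots> = c0 * (\<Sum>c\<in>UNIV. \<Sum>\<sigma>\<in>S. of_int (sign \<sigma>) * (F \<sigma> c * u (\<sigma> 0) c))"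
      by (simp add: sum_distrib_left mult_ac)
    also have "\<dots> = c0 * (\<Sum>\<sigma>\<in>S. \<Sum>c\<in>UNIV. of_int (sign \<sigma>) * (F \<sigma> c * u (\<sigma> 0) c))"
      by (subst sum.swap) (rule refl)
    also have "\<dots> = c0 * (\<Sum>\<sigma>\<in>S. of_int (sign \<sigma>) * (\<Sum>c\<in>UNIV. F \<sigma> c * u (\<sigma> 0) c))"
      by (simp add: sum_distrib_left)
    also have "\<dots> = c0 * (\<Sum>\<sigma>\<in>S. of_int (sign \<sigma>) * (of_int (sign \<sigma>) * g))"
      unfolding K
      by (rule arg_cong[where f="\<lambda>x. c0 * x"], rule sum.cong[OF refl])
         (use Gz Gs in simp)
    also have "\<dots> = c0 * of_nat (card S) * g"
      by (simp add: mult.assoc[symmetric] of_int_mult[symmetric])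
    also have "\<dots> = g"
      unfolding S_def c0_def by (simp add: card_permutations)
    finally show ?thesis .
  qed
  define N0 where "N0 = card {\<sigma>. \<sigma> permutes {..<p} \<and> \<sigma> 0 = (0::nat)}"
  have Nfib: "card {\<sigma>\<in>S. \<sigma> 0 = i} = N0" if "i < p" for i
    unfolding S_def N0_def using card_fiber[OF that] by simp
  have pN: "p * N0 = fact p" unfolding N0_def using card_fiber0[OF assms(1)] .
  have tauS: "\<tau> 0 < p" if "\<tau> \<in> S" for \<tau>
    using that permutes_in_image[of \<tau> "{..<p}" 0] pm unfolding S_def by auto
  have sq: "comp11 P P a b = c0 * of_nat N0 * g * P a b" for a b
  proof -
    define f where "f \<sigma> c = of_int (sign \<sigma>) * u (\<sigma> 0) a * F \<sigma> c" for \<sigma> c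
    define h where "h \<tau> c = of_int (sign \<tau>) * u (\<tau> 0) c * F \<tau> b" for \<tau> c
    have "comp11 P P a b = (\<Sum>c\<in>UNIV. (c0 * (\<Sum>\<sigma>\<in>S. f \<sigma> c)) * (c0 * (\<Sum>\<tau>\<in>S. h \<tau> c)))"
      unfolding comp11_def P_eq f_def h_def ..
    also have "\<dots> = (\<Sum>c\<in>UNIV. c0 * c0 * (\<Sum>\<sigma>\<in>S. \<Sum>\<tau>\<in>S. f \<sigma> c * h \<tau> c))"
      by (rule sum.cong[OF refl]) (simp only: sum_product mult_ac)
    also have "\<dots> = c0 * c0 * (\<Sum>c\<in>UNIV. \<Sum>\<sigma>\<in>S. \<Sum>\<tau>\<in>S. f \<sigma> c * h \<tau> c)"
      by (simp add: sum_distrib_left)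
    also have "\<dots> = c0 * c0 * (\<Sum>\<sigma>\<in>S. \<Sum>c\<in>UNIV. \<Sum>\<tau>\<in>S. f \<sigma> c * h \<tau> c)"
      by (subst sum.swap) (rule refl)
    also have "\<dots> = c0 * c0 * (\<Sum>\<sigma>\<in>S. \<Sum>\<tau>\<in>S. \<Sum>c\<in>UNIV. f \<sigma> c * h \<tau> c)"
      by (subst (2) sum.swap) (rule refl)
    also have "\<dots> = c0 * c0 * (\<Sum>\<sigma>\<in>S. \<Sum>\<tau>\<in>S. (of_int (sign \<sigma>) * u (\<sigma> 0) a * of_int (sign \<tau>) * F \<tau> b) * (\<Sum>c\<in>UNIV. F \<sigma> c * u (\<tau> 0) c))"
      unfolding f_def h_def by (simp add: sum_distrib_left mult_ac)
    also have "\<dots> = c0 * c0 * (\<Sum>\<sigma>\<in>S. \<Sum>\<tau>\<in>S. (of_int (sign \<sigma>) * u (\<sigma> 0) a * of_int (sign \<tau>) * F \<tau> b) * (if \<sigma> 0 = \<tau> 0 then of_int (sign \<sigma>) * g else 0))"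
      unfolding K by (intro arg_cong[where f="\<lambda>x. c0 * c0 * x"] sum.cong refl) (simp add: Gz tauS)
    also have "\<dots> = c0 * c0 * (\<Sum>\<tau>\<in>S. \<Sum>\<sigma>\<in>S. (if \<sigma> 0 = \<tau> 0 then u (\<tau> 0) a * of_int (sign \<tau>) * F \<tau> b * g else 0))"
    proof -
      have "\<And>\<sigma> \<tau>. (of_int (sign \<sigma>) * u (\<sigma> 0) a * of_int (sign \<tau>) * F \<tau> b) * (if \<sigma> 0 = \<tau> 0 then of_int (sign \<sigma>) * g else 0)
         = (if \<sigma> 0 = \<tau> 0 then u (\<tau> 0) a * of_int (sign \<tau>) * F \<tau> b * g else 0)"
      proof -
        fix \<sigma> \<tau> :: "nat \<Rightarrow> nat"
        have ss: "of_int (sign \<sigma>) * (of_int (sign \<sigma>) :: 'a) = 1"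
          by (metis of_int_1 of_int_mult sign_idempotent)
        show "?thesis \<sigma> \<tau>"
        proof (cases "\<sigma> 0 = \<tau> 0")
          case True
          have "(of_int (sign \<sigma>) * u (\<sigma> 0) a * of_int (sign \<tau>) * F \<tau> b) * (of_int (sign \<sigma>) * g)
             = (of_int (sign \<sigma>) * of_int (sign \<sigma>)) * (u (\<sigma> 0) a * of_int (sign \<tau>) * F \<tau> b * g)"
            by (simp only: mult_ac)
          then show ?thesis using True ss by simp
        qed simp
      qed
      then have "c0 * c0 * (\<Sum>\<sigma>\<in>S. \<Sum>\<tau>\<in>S. (of_int (sign \<sigma>) * u (\<sigma> 0) a * of_int (sign \<tau>) * F \<tau> b) * (if \<sigma> 0 = \<tau> 0 then of_int (sign \<sigma>) * g else 0))
         = c0 * c0 * (\<Sum>\<sigma>\<in>S. \<Sum>\<tau>\<in>S. (if \<sigma> 0 = \<tau> 0 then u (\<tau> 0) a * of_int (sign \<tau>) * F \<tau> b * g else 0))"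
        by (simp only:)
      also have "\<dots> = c0 * c0 * (\<Sum>\<tau>\<in>S. \<Sum>\<sigma>\<in>S. (if \<sigma> 0 = \<tau> 0 then u (\<tau> 0) a * of_int (sign \<tau>) * F \<tau> b * g else 0))"
        by (subst sum.swap) (rule refl)
      finally show ?thesis .
    qed
    also have "\<dots> = c0 * c0 * (\<Sum>\<tau>\<in>S. of_nat N0 * (u (\<tau> 0) a * of_int (sign \<tau>) * F \<tau> b * g))"
    proof -
      have "(\<Sum>\<sigma>\<in>S. (if \<sigma> 0 = \<tau> 0 then u (\<tau> 0) a * of_int (sign \<tau>) * F \<tau> b * g else 0))
          = of_nat N0 * (u (\<tau> 0) a * of_int (sign \<tau>) * F \<tau> b * g)" if "\<tau> \<in> S" for \<tau>
        using sum.inter_filter[OF finS, of "\<lambda>_. u (\<tau> 0) a * of_int (sign \<tau>) * F \<tau> b * g" "\<lambda>\<sigma>. \<sigma> 0 = \<tau> 0"]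
          Nfib[OF tauS[OF that]] by simp
      then show ?thesis by simp
    qed
    also have "\<dots> = c0 * of_nat N0 * g * (c0 * (\<Sum>\<tau>\<in>S. of_int (sign \<tau>) * u (\<tau> 0) a * F \<tau> b))"
      by (simp add: sum_distrib_left mult_ac)
    also have "\<dots> = c0 * of_nat N0 * g * P a b" unfolding P_eq ..
    finally show ?thesis .
  qed
  have cN: "c0 * of_nat N0 = 1 / of_nat p"
  proof -
    have "of_nat (fact p) = (of_nat p * of_nat N0 :: 'a)" using pN by (metis of_nat_mult)
    moreover have "of_nat p \<noteq> (0::'a)" using assms(1) by simp
    moreover have "N0 \<noteq> 0" using pN by (metis fact_nonzero mult_0_right)
    ultimately show ?thesis unfolding c0_def by (simp add: field_simps)
  qed
  show ?thesis
  proof (rule ext, rule ext)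
    fix a b
    have "comp11 P (\<lambda>a b. P a b - 1 / of_nat p * tr11 P * delta11 a b) a b
        = comp11 P P a b - 1 / of_nat p * g * P a b"
    proof -
      have d: "(\<Sum>c\<in>UNIV. P a c * delta11 c b) = P a b"
        by (simp add: delta11_def if_distrib cong: if_cong)
      have "comp11 P (\<lambda>a b. P a b - 1 / of_nat p * tr11 P * delta11 a b) a b
          = (\<Sum>c\<in>UNIV. P a c * P c b - (1 / of_nat p * g) * (P a c * delta11 c b))"
        unfolding comp11_def tr by (simp add: right_diff_distrib mult_ac)
      also have "\<dots> = comp11 P P a b - (1 / of_nat p * g) * (\<Sum>c\<in>UNIV. P a c * delta11 c b)"
        unfolding comp11_def by (simp add: sum_subtractf sum_distrib_left)
      finally show ?thesis unfolding d by simp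
    qed
    also have "\<dots> = 0" unfolding sq cN by simp
    finally show "comp11 (contract p A B) (\<lambda>a b. contract p A B a b - 1 / of_nat p * tr11 (contract p A B) * delta11 a b) a b = 0"
      unfolding P_def .
  qed
qed
end
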